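(* Let $T \ge 1$ and $E \ge 0$ be integers, let $f \in \mathbb{R}[x]$ have at most $T$ nonzero terms, and let $\xi_1, \dots, \xi_{2T+2E}$ be distinct positive real numbers. Suppose we are given values $y_i = f(\xi_i) + \epsilon_i$, $1 \le i \le 2T+2E$, where $\epsilon_i \in \mathbb{R}$ and at most $E$ of the $\epsilon_i$ are nonzero. If $g \in \mathbb{R}[x]$ has at most $T$ nonzero terms and satisfies $g(\xi_i) = y_i$ for at least $2T+E$ indices $i$, then $g = f$. *)

theory Defs
  imports "HOL-Computational_Algebra.Polynomial"
begin

definition num_terms :: "'a::zero poly \<Rightarrow> nat" where
  "num_terms p = card {i. coeff p i \<noteq> 0}"

end

theory Submission
  imports Defs
begin

lemma poly_rolle:
  fixes p :: "real poly"
  assumes "a < b" "poly p a = 0" "poly p b = 0"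
  shows "\<exists>c. a < c \<and> c < b \<and> poly (pderiv p) c = 0"
proof -
  have cont: "continuous_on {a..b} (poly p)"
    using continuous_on_poly[OF continuous_on_id] by (simp add: id_def)
  obtain c where c: "a < c" "c < b" "DERIV (poly p) c :> 0"
    using Rolle[of a b "poly p", OF assms(1) _ cont] assms by auto
  have "DERIV (poly p) c :> poly (pderiv p) c" by (rule poly_DERIV)
  with c(3) have "poly (pderiv p) c = 0" using DERIV_unique by blast
  with c show ?thesis by auto
qed

lemma deriv_roots:
  fixes p :: "real poly"
  shows "finite S \<Longrightarrow> S \<noteq> {} \<Longrightarrow> card S = n \<Longrightarrow> (\<forall>x\<in>S. poly p x = 0) \<Longrightarrow>
    \<exists>S'. finite S' \<and> card S' = n - 1 \<and> S' \<subseteq> {Min S<..<Max S} \<and> (\<forall>x\<in>S'. poly (pderiv p) x = 0)"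
proof (induction n arbitrary: S)
  case 0
  then show ?case by simp
next
  case (Suc n)
  show ?case
  proof (cases "n = 0")
    case True
    then show ?thesis by (intro exI[of _ "{}"]) auto
  next
    case False
    define m where "m = Max S"
    define S0 where "S0 = S - {m}"
    have mS: "m \<in> S" using Suc.prems m_def by auto
    have fin0: "finite S0" using Suc.prems S0_def by auto
    have c0: "card S0 = n" using Suc.prems mS S0_def by auto
    have ne0: "S0 \<noteq> {}" using c0 False by auto
    have sub: "S0 \<subseteq> S" using S0_def by auto
    obtain S0' where S0': "finite S0'" "card S0' = n - 1" "S0' \<subseteq> {Min S0<..<Max S0}"
      "\<forall>x\<in>S0'. poly (pderiv p) x = 0"
      using Suc.IH[OF fin0 ne0 c0] Suc.prems sub by blast
    have M0: "Max S0 \<in> S0" using fin0 ne0 by simp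
    have lt: "Max S0 < m"
      using M0 S0_def Suc.prems(1) m_def by (metis DiffE Max_ge insertI1 order_le_neq_trans)
    obtain c where c: "Max S0 < c" "c < m" "poly (pderiv p) c = 0"
      using poly_rolle[OF lt] M0 mS sub Suc.prems by blast
    have "Min S \<le> Min S0" using Suc.prems(1) sub ne0 by (simp add: Min_antimono)
    moreover have "Min S0 \<le> Max S0" using fin0 ne0 by simp
    ultimately have s': "insert c S0' \<subseteq> {Min S<..<Max S}" using S0'(3) c m_def lt by auto
    have "c \<notin> S0'" using S0'(3) c by auto
    then have "card (insert c S0') = n" using S0' False by simp
    then show ?thesis using s' S0' c by (intro exI[of _ "insert c S0'"]) auto
  qed
qed

lemma finite_terms: "finite {i. coeff p i \<noteq> 0}"
proof -
  have "{i. coeff p i \<noteq> 0} \<subseteq> {..degree p}" by (auto intro: le_degree)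
  then show ?thesis by (rule finite_subset) simp
qed

lemma num_terms_pos: "p \<noteq> 0 \<Longrightarrow> num_terms p \<ge> 1"
proof -
  assume "p \<noteq> 0"
  then have "coeff p (degree p) \<noteq> 0" by simp
  then have "{i. coeff p i \<noteq> 0} \<noteq> {}" by blast
  then show ?thesis unfolding num_terms_def using finite_terms[of p]
    by (simp add: Suc_le_eq card_gt_0_iff)
qed

lemma num_terms_shift: "num_terms (pCons 0 q) = num_terms q"
proof -
  have "{i. coeff (pCons 0 q) i \<noteq> 0} = Suc ` {i. coeff q i \<noteq> 0}"
  proof (intro set_eqI iffI)
    fix x assume "x \<in> {i. coeff (pCons 0 q) i \<noteq> 0}"
    then show "x \<in> Suc ` {i. coeff q i \<noteq> 0}" by (cases x) (auto simp: coeff_pCons)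
  qed (auto simp: coeff_pCons)
  then show ?thesis unfolding num_terms_def by (simp add: card_image)
qed

lemma num_terms_pderiv:
  fixes p :: "real poly"
  assumes "coeff p 0 \<noteq> 0"
  shows "num_terms p = Suc (num_terms (pderiv p))"
proof -
  have A: "{i. coeff (pderiv p) i \<noteq> 0} = {i. coeff p (Suc i) \<noteq> 0}"
    by (simp add: coeff_pderiv)
  have B: "{i. coeff p i \<noteq> 0} = insert 0 (Suc ` {i. coeff p (Suc i) \<noteq> 0})"
  proof (intro set_eqI iffI)
    fix x assume "x \<in> {i. coeff p i \<noteq> 0}"
    then show "x \<in> insert 0 (Suc ` {i. coeff p (Suc i) \<noteq> 0})" by (cases x) auto
  qed (use assms in auto)
  have fin: "finite {i. coeff p (Suc i) \<noteq> 0}"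
    using finite_terms[of "pderiv p"] A by simp
  show ?thesis unfolding num_terms_def A B using fin by (simp add: card_image)
qed

lemma descartes_weak:
  fixes p :: "real poly"
  shows "p \<noteq> 0 \<Longrightarrow> finite S \<Longrightarrow> S \<subseteq> {0<..} \<Longrightarrow> (\<forall>x\<in>S. poly p x = 0) \<Longrightarrow> card S < num_terms p"
proof (induction "degree p" arbitrary: p S rule: less_induct)
  case less
  show ?case
  proof (cases "S = {}")
    case True
    then show ?thesis using num_terms_pos[OF less.prems(1)] by simp
  next
    case Sne: False
    show ?thesis
    proof (cases "coeff p 0 = 0")
      case True
      obtain a q where pq: "p = pCons a q" by (cases p) auto
      have a0: "a = 0" using True pq by simp
      have q0: "q \<noteq> 0" using less.prems(1) pq a0 by auto
      have dq: "degree q < degree p" using pq q0 by (simp add: degree_pCons_eq)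
      have "\<forall>x\<in>S. poly q x = 0" using less.prems pq a0 by fastforce
      then have "card S < num_terms q" using less.hyps[OF dq q0 less.prems(2,3)] by blast
      then show ?thesis using pq a0 num_terms_shift[of q] by simp
    next
      case False
      show ?thesis
      proof (cases "degree p = 0")
        case True
        then obtain c where "p = [:c:]" by (metis degree_eq_zeroE)
        then have "\<forall>x. poly p x \<noteq> 0" using less.prems(1) by simp
        then show ?thesis using Sne less.prems(4) by auto
      next
        case dp: False
        have pd0: "pderiv p \<noteq> 0" using dp by (simp add: pderiv_eq_0_iff)
        have dd: "degree (pderiv p) < degree p" using dp by (simp add: degree_pderiv)
        obtain S' where S': "finite S'" "card S' = card S - 1" "S' \<subseteq> {Min S<..<Max S}"
          "\<forall>x\<in>S'. poly (pderiv p) x = 0"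
          using deriv_roots[OF less.prems(2) Sne refl less.prems(4)] by blast
        have "Min S > 0" using less.prems(2,3) Sne by auto
        then have "S' \<subseteq> {0<..}" using S'(3) by auto
        then have "card S' < num_terms (pderiv p)"
          using less.hyps[OF dd pd0 S'(1) _ S'(4)] by blast
        then show ?thesis using S'(2) num_terms_pderiv[OF False] Sne less.prems(2)
          by (simp add: card_gt_0_iff)
      qed
    qed
  qed
qed

lemma num_terms_diff: "num_terms (f - g :: real poly) \<le> num_terms f + num_terms g"
proof -
  have "{i. coeff (f - g) i \<noteq> 0} \<subseteq> {i. coeff f i \<noteq> 0} \<union> {i. coeff g i \<noteq> 0}" by auto
  then have "card {i. coeff (f - g) i \<noteq> 0} \<le> card ({i. coeff f i \<noteq> 0} \<union> {i. coeff g i \<noteq> 0})"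
    by (intro card_mono) (auto simp: finite_terms)
  also have "\<dots> \<le> num_terms f + num_terms g" unfolding num_terms_def by (rule card_Un_le)
  finally show ?thesis unfolding num_terms_def .
qed

theorem corollary2:
  fixes T E :: nat and f g :: "real poly" and \<xi> y \<epsilon> :: "nat \<Rightarrow> real"
  assumes "T \<ge> 1"
    and "num_terms f \<le> T"
    and "inj_on \<xi> {1..2*T+2*E}"
    and "\<forall>i\<in>{1..2*T+2*E}. \<xi> i > 0"
    and "\<forall>i\<in>{1..2*T+2*E}. y i = poly f (\<xi> i) + \<epsilon> i"
    and "card {i\<in>{1..2*T+2*E}. \<epsilon> i \<noteq> 0} \<le> E"
    and "num_terms g \<le> T"
    and "card {i\<in>{1..2*T+2*E}. poly g (\<xi> i) = y i} \<ge> 2*T+E"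
  shows "g = f"
proof (rule ccontr)
  assume ne: "g \<noteq> f"
  define I where "I = {1..2*T+2*E}"
  define A where "A = {i\<in>I. poly g (\<xi> i) = y i}"
  define B where "B = {i\<in>I. \<epsilon> i \<noteq> 0}"
  have finA: "finite A" "finite B" unfolding A_def B_def I_def by auto
  have "card A \<le> card (A - B) + card B"
  proof -
    have "card A \<le> card ((A - B) \<union> B)" by (rule card_mono) (use finA in auto)
    also have "\<dots> \<le> card (A - B) + card B" by (rule card_Un_le)
    finally show ?thesis .
  qed
  then have cAB: "card (A - B) \<ge> 2*T" using assms(6,8) unfolding A_def B_def I_def by linarith
  have subI: "A - B \<subseteq> I" unfolding A_def by auto
  have cS: "card (\<xi> ` (A - B)) = card (A - B)"
  proof (rule card_image)
    show "inj_on \<xi> (A - B)" using inj_on_subset[OF assms(3)] subI unfolding I_def by blast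
  qed
  have roots: "\<forall>x\<in>\<xi> ` (A - B). poly (f - g) x = 0"
    using assms(5) unfolding A_def B_def I_def by auto
  have pos: "\<xi> ` (A - B) \<subseteq> {0<..}" using assms(4) subI unfolding I_def by auto
  have "f - g \<noteq> 0" using ne by auto
  then have "card (\<xi> ` (A - B)) < num_terms (f - g)"
    using descartes_weak[of "f - g" "\<xi> ` (A - B)"] roots pos finA by auto
  moreover have "num_terms (f - g) \<le> 2*T" using num_terms_diff[of f g] assms(2,7) by linarith
  ultimately show False using cS cAB by linarith
qed

end
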